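(* Assume CH. There exists a set $A\subseteq\mathbb{R}^2$ such that every vertical slice $A_x=\{y:(x,y)\in A\}$ ($x\in\mathbb{R}$) is cocountable in $\mathbb{R}$, and $A$ is both completely $\mathcal{M}$-nonmeasurable and completely $\mathcal{N}$-nonmeasurable in $\mathbb{R}^2$.
   Context: $\mathcal{M}$ and $\mathcal{N}$ denote the $\sigma$-ideals of meager and Lebesgue-null subsets of $\mathbb{R}^2$. A set $A\subseteq\mathbb{R}^2$ is completely $\mathcal{I}$-nonmeasurable if $A$ meets every Borel set $B\notin\mathcal{I}$ and contains no Borel set $B\notin\mathcal{I}$. *)

theory Defs
  imports "HOL-Analysis.Analysis" "HOL-Library.Equipollence"
begin

definition CH :: bool where
  "CH \<longleftrightarrow> (\<forall>S :: real set. uncountable S \<longrightarrow> S \<approx> (UNIV :: real set))"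

definition nowhere_dense :: "'a::topological_space set \<Rightarrow> bool" where
  "nowhere_dense S \<longleftrightarrow> interior (closure S) = {}"

definition meager :: "'a::topological_space set \<Rightarrow> bool" where
  "meager S \<longleftrightarrow> (\<exists>F. countable F \<and> (\<forall>N\<in>F. nowhere_dense N) \<and> S \<subseteq> \<Union>F)"

definition lnull :: "(real \<times> real) set \<Rightarrow> bool" where
  "lnull S \<longleftrightarrow> S \<in> null_sets (lebesgue :: (real \<times> real) measure)"

text \<open>Completely I-nonmeasurable, for an ideal given by its membership predicate I.\<close>
definition completely_nonmeasurable :: "('a::topological_space set \<Rightarrow> bool) \<Rightarrow> 'a set \<Rightarrow> bool" where
  "completely_nonmeasurable I A \<longleftrightarrow>
     (\<forall>B \<in> sets borel. \<not> I B \<longrightarrow> A \<inter> B \<noteq> {} \<and> \<not> B \<subseteq> A)"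

end

theory Submission
  imports Defs
begin

lemma meager_mono: "meager T \<Longrightarrow> S \<subseteq> T \<Longrightarrow> meager S"
  unfolding meager_def by (metis subset_trans)

lemma meager_empty: "meager {}"
  unfolding meager_def by (rule exI[of _ "{}"]) simp

lemma meagerE:
  assumes "meager S"
  obtains F where "countable F" "\<And>N. N \<in> F \<Longrightarrow> nowhere_dense N" "S \<subseteq> \<Union>F"
  using assms unfolding meager_def by metis

lemma meagerI:
  assumes "countable F" "\<And>N. N \<in> F \<Longrightarrow> nowhere_dense N" "S \<subseteq> \<Union>F"
  shows "meager S"
  using assms unfolding meager_def by metis

lemma meager_UN:
  assumes "countable I" "\<And>i. i \<in> I \<Longrightarrow> meager (A i)"
  shows "meager (\<Union>i\<in>I. A i)"
proof -
  define F where "F i = (SOME F. countable F \<and> (\<forall>N\<in>F. nowhere_dense N) \<and> A i \<subseteq> \<Union>F)" for i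
  have F: "countable (F i) \<and> (\<forall>N\<in>F i. nowhere_dense N) \<and> A i \<subseteq> \<Union>(F i)" if "i \<in> I" for i
  proof -
    have "\<exists>F. countable F \<and> (\<forall>N\<in>F. nowhere_dense N) \<and> A i \<subseteq> \<Union>F"
      using assms(2)[OF that] by (simp add: meager_def)
    then show ?thesis unfolding F_def by (rule someI_ex)
  qed
  show ?thesis
  proof (rule meagerI)
    show "countable (\<Union>(F ` I))" by (rule countable_UN) (use F assms(1) in auto)
    show "nowhere_dense N" if "N \<in> \<Union>(F ` I)" for N using that F by auto
    show "(\<Union>i\<in>I. A i) \<subseteq> \<Union>(\<Union>(F ` I))"
    proof
      fix x assume "x \<in> (\<Union>i\<in>I. A i)"
      then obtain i where i: "i \<in> I" "x \<in> A i" by auto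
      then obtain N where "N \<in> F i" "x \<in> N" using F[OF i(1)] by auto
      then show "x \<in> \<Union>(\<Union>(F ` I))" using i(1) by auto
    qed
  qed
qed

lemma meager_Un: "meager A \<Longrightarrow> meager B \<Longrightarrow> meager (A \<union> B)"
proof -
  assume "meager A" "meager B"
  then obtain F1 F2 where "countable F1" "\<And>N. N\<in>F1 \<Longrightarrow> nowhere_dense N" "A \<subseteq> \<Union>F1"
    "countable F2" "\<And>N. N\<in>F2 \<Longrightarrow> nowhere_dense N" "B \<subseteq> \<Union>F2" by (metis meagerE)
  then show ?thesis by (intro meagerI[of "F1 \<union> F2"]) auto
qed

lemma nowhere_dense_closed: "closed S \<Longrightarrow> interior S = {} \<Longrightarrow> nowhere_dense S"
  unfolding nowhere_dense_def by (simp add: closure_closed)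

lemma nowhere_dense_meager: "nowhere_dense S \<Longrightarrow> meager S"
  by (rule meagerI[of "{S}"]) auto

lemma nowhere_dense_closure: "nowhere_dense S \<Longrightarrow> nowhere_dense (closure S)"
  unfolding nowhere_dense_def by simp

lemma open_not_meager:
  fixes U :: "'a::{real_normed_vector,heine_borel} set"
  assumes "open U" "U \<noteq> {}"
  shows "\<not> meager U"
proof
  assume "meager U"
  then obtain F where F: "countable F" "\<And>N. N\<in>F \<Longrightarrow> nowhere_dense N" "U \<subseteq> \<Union>F"
    by (metis meagerE)
  define G where "G = (\<lambda>N. - closure N) ` F"
  have "UNIV \<subseteq> closure (\<Inter>G)"
  proof (rule Baire)
    show "countable G" using F(1) by (simp add: G_def)
    fix T assume "T \<in> G"
    then obtain N where N: "N \<in> F" "T = - closure N" by (auto simp: G_def)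
    have "closure T = UNIV"
      using F(2)[OF N(1)] N(2) by (simp add: closure_complement nowhere_dense_def)
    then show "openin (top_of_set UNIV) T \<and> UNIV \<subseteq> closure T"
      using N(2) by auto
  qed simp
  then have "closure (\<Inter>G) = UNIV" by auto
  then have "U \<inter> \<Inter>G \<noteq> {}"
    using assms open_Int_closure_eq_empty[OF assms(1), of "\<Inter>G"] by auto
  then obtain y where y: "y \<in> U" "y \<in> \<Inter>G" by auto
  then obtain N where N: "N\<in>F" "y \<in> N" using F(3) by auto
  moreover have "y \<notin> closure N" using y(2) N(1) by (auto simp: G_def)
  ultimately show False using closure_subset by auto
qed


lemma borel_BP:
  fixes B :: "'a::topological_space set"
  assumes "B \<in> sets borel"
  shows "\<exists>U. open U \<and> meager ((B - U) \<union> (U - B))"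
proof -
  have "B \<in> sigma_sets UNIV {S. open S}" using assms sets_borel by auto
  then show ?thesis
  proof induct
    case (Basic a) then show ?case by (intro exI[of _ a]) (auto simp: meager_empty)
  next
    case Empty then show ?case by (intro exI[of _ "{}"]) (auto simp: meager_empty)
  next
    case (Compl a)
    then obtain U where U: "open U" "meager ((a - U) \<union> (U - a))" by blast
    have nd: "nowhere_dense (closure U - U)"
    proof (rule nowhere_dense_closed)
      show "closed (closure U - U)" using U(1) by (simp add: closed_Diff)
      let ?W = "interior (closure U - U)"
      have "?W \<inter> U = {}" using interior_subset by blast
      then have "?W \<inter> closure U = {}" using open_Int_closure_eq_empty[of ?W U] by auto
      moreover have "?W \<subseteq> closure U" using interior_subset by blast
      ultimately show "?W = {}" by blast
    qed
    have s: "((UNIV - a) - (- closure U)) \<union> ((- closure U) - (UNIV - a))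
          \<subseteq> ((a - U) \<union> (U - a)) \<union> (closure U - U)"
      using closure_subset by blast
    have m1: "meager (((a - U) \<union> (U - a)) \<union> (closure U - U))"
      by (rule meager_Un[OF U(2) nowhere_dense_meager[OF nd]])
    have m2: "meager (((UNIV - a) - (- closure U)) \<union> ((- closure U) - (UNIV - a)))"
      by (rule meager_mono[OF m1 s])
    have "open (- closure U)" by auto
    then show ?case using m2 by blast
  next
    case (Union a)
    then have "\<forall>i. \<exists>U. open U \<and> meager ((a i - U) \<union> (U - a i))" by blast
    from choice[OF this] obtain U where U0: "\<forall>i. open (U i) \<and> meager ((a i - U i) \<union> (U i - a i))" by blast
    then have U: "\<And>i. open (U i)" "\<And>i. meager ((a i - U i) \<union> (U i - a i))" by auto
    have s: "((\<Union>i. a i) - (\<Union>i. U i)) \<union> ((\<Union>i. U i) - (\<Union>i. a i)) \<subseteq> (\<Union>i. (a i - U i) \<union> (U i - a i))"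
      by blast
    have m:  "meager (\<Union>i. (a i - U i) \<union> (U i - a i))"
      using meager_UN[of "UNIV::nat set" "\<lambda>i. (a i - U i) \<union> (U i - a i)"] U(2) by simp
    have "open (\<Union>i. U i)" using U(1) by auto
    then show ?case using meager_mono[OF m s] by blast
  qed
qed

lemma borel_nonmeager_Gdelta:
  fixes B :: "'a::{real_normed_vector,heine_borel} set"
  assumes "B \<in> sets borel" "\<not> meager B"
  obtains Us :: "nat \<Rightarrow> 'a set" where "\<And>n. open (Us n)" "(\<Inter>n. Us n) \<subseteq> B" "\<not> meager (\<Inter>n. Us n)"
proof -
  obtain U where U: "open U" "meager ((B - U) \<union> (U - B))" using borel_BP[OF assms(1)] by blast
  then obtain F where F: "countable F" "\<And>N. N\<in>F \<Longrightarrow> nowhere_dense N" "(B - U) \<union> (U - B) \<subseteq> \<Union>F"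
    by (metis meagerE)
  define K where "K = \<Union>(closure ` F)"
  define Us where "Us n = U - (if F = {} then {} else closure (from_nat_into F n))" for n
  have opn: "open (Us n)" for n using U(1) by (auto simp: Us_def)
  have eq: "(\<Inter>n. Us n) = U - K"
  proof (cases "F = {}")
    case True then show ?thesis by (simp add: Us_def K_def)
  next
    case False
    have r: "range (from_nat_into F) = F" using range_from_nat_into[OF False F(1)] .
    have "(\<Inter>n. U - closure (from_nat_into F n)) = U - \<Union>(closure ` range (from_nat_into F))" by blast
    then show ?thesis unfolding Us_def K_def using False r by simp
  qed
  have sub: "U - K \<subseteq> B" using F(3) closure_subset unfolding K_def by blast
  have Km: "meager K" unfolding K_def
    using meager_UN[OF F(1), of closure] F(2) nowhere_dense_closure nowhere_dense_meager by auto
  have "\<not> meager (U - K)"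
  proof
    assume "meager (U - K)"
    have "U \<subseteq> (U - K) \<union> K" by blast
    then have "meager U" by (rule meager_mono[OF meager_Un[OF \<open>meager (U - K)\<close> Km]])
    then have "U = {}" using open_not_meager U(1) by blast
    then have "B \<subseteq> (B - U) \<union> (U - B)" by blast
    then have "meager B" by (rule meager_mono[OF U(2)])
    then show False using assms(2) by simp
  qed
  then have "\<not> meager (\<Inter>n. Us n)" using eq by simp
  moreover have "(\<Inter>n. Us n) \<subseteq> B" using eq sub by simp
  ultimately show ?thesis using that opn by blast
qed

lemma borel_nonnull_closed:
  fixes B :: "'a::euclidean_space set"
  assumes "B \<in> sets borel" "\<not> negligible B"
  obtains K where "closed K" "K \<subseteq> B" "\<not> negligible K"
proof -
  have Beq: "B = (\<Union>n::nat. B \<inter> cball 0 (real n))"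
  proof (intro equalityI subsetI)
    fix x assume x: "x \<in> B"
    obtain n where "norm x \<le> real n" using real_arch_simple by blast
    then show "x \<in> (\<Union>n::nat. B \<inter> cball 0 (real n))" using x by (auto simp: mem_cball_0)
  qed auto
  have "\<exists>n. \<not> negligible (B \<inter> cball 0 (real n))"
  proof (rule ccontr)
    assume "\<nexists>n. \<not> negligible (B \<inter> cball 0 (real n))"
    then have "negligible (\<Union>n::nat. B \<inter> cball 0 (real n))" by (intro negligible_Union_nat) blast
    with Beq assms(2) show False by simp
  qed
  then obtain n where n: "\<not> negligible (B \<inter> cball 0 (real n))" by blast
  define B' where "B' = B \<inter> cball 0 (real n)"
  have Bl: "B' \<in> sets lebesgue" using assms(1) by (simp add: B'_def)
  have "bounded B'" unfolding B'_def by (meson bounded_Int bounded_cball)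
  then have "B' \<in> lmeasurable" using Bl by (rule bounded_set_imp_lmeasurable)
  then have fin: "emeasure lebesgue B' < \<infinity>" by (auto simp: fmeasurable_def)
  have nz: "emeasure lebesgue B' \<noteq> 0"
    using n Bl by (auto simp: B'_def negligible_iff_null_sets null_sets_def)
  define e where "e = measure lebesgue B'"
  have Be: "emeasure lebesgue B' = ennreal e"
    using fin by (simp add: e_def emeasure_eq_ennreal_measure)
  have "\<not> e \<le> 0" using nz Be by (simp add: ennreal_eq_0_iff)
  then have "e > 0" by simp
  then obtain T where T: "closed T" "T \<subseteq> B'" "emeasure lebesgue (B' - T) < ennreal e"
    using sets_lebesgue_inner_closed[OF Bl] by metis
  have "\<not> negligible T"
  proof
    assume "negligible T"
    then have "T \<in> null_sets lebesgue" by (simp add: negligible_iff_null_sets)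
    then have "emeasure lebesgue (B' - T) = emeasure lebesgue B'" using emeasure_Diff_null_set Bl by blast
    then show False using T(3) Be by simp
  qed
  moreover have "T \<subseteq> B" using T(2) by (simp add: B'_def)
  ultimately show ?thesis using that T(1) by blast
qed

lemma small_null_meager:
  fixes X :: "real set" and P :: "(real \<times> real) set"
  assumes "countable X" "countable P"
  shows "meager ({z. fst z \<in> X} \<union> P) \<and> negligible ({z. fst z \<in> X} \<union> P)"
proof -
  define L where "L x = {z::real \<times> real. (1::real, 0::real) \<bullet> z = x}" for x
  have eq: "{z. fst z \<in> X} = (\<Union>x\<in>X. L x)" by (auto simp: L_def)
  have ne: "(1::real, 0::real) \<noteq> 0" by (simp add: zero_prod_def)
  have ndL: "nowhere_dense (L x)" for x unfolding L_def
    by (rule nowhere_dense_closed[OF closed_hyperplane interior_hyperplane[OF ne]])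
  have ngL: "negligible (L x)" for x unfolding L_def
    by (rule negligible_hyperplane) (use ne in auto)
  have PU: "P = (\<Union>p\<in>P. {p})" by auto
  have m1: "meager (\<Union>x\<in>X. L x)" by (rule meager_UN[OF assms(1)]) (rule nowhere_dense_meager[OF ndL])
  have m2: "meager (\<Union>p\<in>P. {p})"
    by (rule meager_UN[OF assms(2)]) (rule nowhere_dense_meager[OF nowhere_dense_closed]; simp)
  have n1: "negligible (\<Union>x\<in>X. L x)"
    by (rule negligible_countable_Union) (use assms(1) ngL in auto)
  have n2: "negligible (\<Union>p\<in>P. {p})"
    by (rule negligible_countable_Union) (use assms(2) in auto)
  show ?thesis using meager_Un[OF m1 m2] negligible_Un[OF n1 n2] eq PU by simp
qed

lemma lnull_iff: "lnull S \<longleftrightarrow> negligible S"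
  by (simp add: lnull_def negligible_iff_null_sets)

lemma family:
  "\<exists>g :: real \<Rightarrow> (real \<times> real) set. \<forall>B\<in>sets borel. (\<not> meager B \<or> \<not> lnull B) \<longrightarrow>
      (\<exists>r. g r \<subseteq> B \<and> (\<not> meager (g r) \<or> \<not> lnull (g r)))"
proof -
  obtain Bb :: "nat \<Rightarrow> (real \<times> real) set" where "inj Bb" "\<And>n. open (Bb n)"
    and Bb: "\<And>S. open S \<Longrightarrow> \<exists>k. S = \<Union>{Bb n |n. n \<in> k}"
    by (rule univ_second_countable_sequence) blast
  define opn where "opn k = \<Union>{Bb n |n. n \<in> k}" for k
  define dec where "dec N n = {m. prod_encode (n, m) \<in> N}" for N :: "nat set" and n
  define h where "h N = (if prod_encode (0,0) \<in> N then (\<Inter>n. opn (dec N (Suc n))) else - opn (dec N 1))" for N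
  define code where "code b ks = {prod_encode (Suc n, m) | n m. m \<in> ks n} \<union> (if b then {prod_encode (0,0)} else {})"
    for b :: bool and ks :: "nat \<Rightarrow> nat set"
  have dc: "dec (code b ks) (Suc n) = ks n" for b ks n
    by (auto simp: dec_def code_def prod_encode_eq)
  have c0: "prod_encode (0,0) \<in> code b ks \<longleftrightarrow> b" for b ks
    by (auto simp: code_def prod_encode_eq)
  have hc: "h (code b ks) = (if b then (\<Inter>n. opn (ks n)) else - opn (ks 0))" for b ks
    by (cases b) (simp_all add: h_def dc c0)
  obtain f :: "nat set \<Rightarrow> real" where f: "bij_betw f UNIV UNIV"
    using nat_sets_eqpoll_reals unfolding eqpoll_def by blast
  define g where "g r = h (inv f r)" for r
  have gc: "\<exists>r. g r = (if b then (\<Inter>n. opn (ks n)) else - opn (ks 0))" for b and ks :: "nat \<Rightarrow> nat set"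
  proof -
    have "inv f (f (code b ks)) = code b ks" using f by (simp add: bij_betw_def)
    then show ?thesis by (intro exI[of _ "f (code b ks)"]) (simp add: g_def hc)
  qed
  have "\<forall>B\<in>sets borel. (\<not> meager B \<or> \<not> lnull B) \<longrightarrow>
      (\<exists>r. g r \<subseteq> B \<and> (\<not> meager (g r) \<or> \<not> lnull (g r)))"
  proof (intro ballI impI)
    fix B :: "(real \<times> real) set"
    assume B: "B \<in> sets borel" and pos: "\<not> meager B \<or> \<not> lnull B"
    show "\<exists>r. g r \<subseteq> B \<and> (\<not> meager (g r) \<or> \<not> lnull (g r))"
    proof (cases "meager B")
      case False
      obtain Us :: "nat \<Rightarrow> (real \<times> real) set" where Us: "\<And>n. open (Us n)" "(\<Inter>n. Us n) \<subseteq> B" "\<not> meager (\<Inter>n. Us n)"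
        by (rule borel_nonmeager_Gdelta[OF B False]) blast
      have "\<forall>n. \<exists>k. Us n = opn k"
      proof
        fix n show "\<exists>k. Us n = opn k" using Bb[OF Us(1)[of n]] unfolding opn_def .
      qed
      from choice[OF this] obtain ks where ks: "\<forall>n. Us n = opn (ks n)" by blast
      obtain r where "g r = (\<Inter>n. opn (ks n))" using gc[of True ks] by auto
      then have "g r = (\<Inter>n. Us n)" using ks by simp
      then show ?thesis using Us by (intro exI[of _ r]) simp
    next
      case True
      then have "\<not> negligible B" using pos by (simp add: lnull_iff)
      then obtain K where K: "closed K" "K \<subseteq> B" "\<not> negligible K"
        by (rule borel_nonnull_closed[OF B]) blast
      have "\<exists>k. - K = opn k" using Bb[OF open_Compl[OF K(1)]] unfolding opn_def .
      then obtain k where kk: "- K = opn k" by (elim exE)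
      have "K = - (- K)" by simp
      also have "\<dots> = - opn k" using kk by simp
      finally have Kk: "K = - opn k" .
      obtain r where "g r = - opn ((\<lambda>n. k) 0)" using gc[of False "\<lambda>n. k"] by auto
      then have "g r = K" using Kk by simp
      then show ?thesis using K by (intro exI[of _ r]) (simp add: lnull_iff)
    qed
  qed
  then show ?thesis by blast
qed

lemma ch_wo:
  assumes "CH"
  obtains W :: "real rel" where "Well_order W" "Field W = UNIV" "\<And>a. countable (underS W a)"
proof -
  let ?W = "card_of (UNIV :: real set)"
  have wo: "Well_order ?W" using card_of_well_order_on[of "UNIV :: real set"] by (simp add: Field_card_of)
  have cnt: "countable (underS ?W a)" for a
  proof (rule ccontr)
    assume "uncountable (underS ?W a)"
    then have "underS ?W a \<approx> (UNIV :: real set)" using assms by (simp add: CH_def)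
    then have iso: "(card_of (underS ?W a), card_of (UNIV :: real set)) \<in> ordIso" by (simp add: eqpoll_iff_card_of_ordIso)
    have "(card_of (underS ?W a), ?W) \<in> ordLess"
      by (rule card_of_underS[OF card_of_Card_order]) (simp add: Field_card_of)
    then show False using iso not_ordLess_ordIso by blast
  qed
  show ?thesis using that[OF wo Field_card_of cnt] .
qed


theorem mainTheorem5:
  assumes "CH"
  shows "\<exists>A :: (real \<times> real) set.
           (\<forall>x::real. countable (UNIV - {y. (x, y) \<in> A}))
         \<and> completely_nonmeasurable meager A
         \<and> completely_nonmeasurable lnull A"
proof -
  obtain W :: "real rel" where W: "Well_order W" "Field W = UNIV" "\<And>a. countable (underS W a)"
    by (rule ch_wo[OF assms]) blast
  have wo: "wo_rel W" using W(1) by (simp add: wo_rel_def)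
  have tot: "(a, b) \<in> W \<or> (b, a) \<in> W" for a b
    using wo_rel.TOTALS[OF wo] W(2) by auto
  obtain g :: "real \<Rightarrow> (real \<times> real) set" where g: "\<forall>B\<in>sets borel. (\<not> meager B \<or> \<not> lnull B) \<longrightarrow>
      (\<exists>r. g r \<subseteq> B \<and> (\<not> meager (g r) \<or> \<not> lnull (g r)))"
    using family by blast
  define pos where "pos S \<longleftrightarrow> \<not> meager S \<or> \<not> lnull S" for S :: "(real \<times> real) set"
  define R where "R = W - Id"
  have wf: "wf R" using wo_rel.WF[OF wo] by (simp add: R_def)
  define Bad where "Bad f r = {z::real \<times> real. fst z \<in> under W r} \<union> (fst ` f ` underS W r \<union> snd ` f ` underS W r)"
    for f :: "real \<Rightarrow> (real \<times> real) \<times> (real \<times> real)" and r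
  define H where "H f r = (SOME pq. fst pq \<in> g r - Bad f r \<and> snd pq \<in> g r - Bad f r \<and> fst pq \<noteq> snd pq)"
    for f r
  define F where "F = wfrec R H"
  have Feq: "F r = H F r" for r
  proof -
    have "F r = H (cut F R r) r" unfolding F_def by (rule wfrec[OF wf])
    moreover have "Bad (cut F R r) r = Bad F r"
    proof -
      have "(cut F R r) ` underS W r = F ` underS W r"
        by (rule image_cong) (auto simp: cut_apply R_def underS_def)
      then show ?thesis by (simp add: Bad_def)
    qed
    ultimately show ?thesis by (simp add: H_def)
  qed
  have cu: "countable (under W r)" for r
  proof -
    have "under W r \<subseteq> insert r (underS W r)" by (auto simp: under_def underS_def)
    then show ?thesis by (rule countable_subset) (simp add: W(3))
  qed
  have avoid: "\<not> (g r \<subseteq> {z. fst z \<in> under W r} \<union> P)" if "pos (g r)" "countable P" for r P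
  proof
    assume sub: "g r \<subseteq> {z. fst z \<in> under W r} \<union> P"
    have "meager ({z. fst z \<in> under W r} \<union> P) \<and> negligible ({z. fst z \<in> under W r} \<union> P)"
      by (rule small_null_meager[OF cu that(2)])
    then have m: "meager ({z. fst z \<in> under W r} \<union> P)" and n: "negligible ({z. fst z \<in> under W r} \<union> P)"
      by auto
    have "meager (g r)" by (rule meager_mono[OF m sub])
    moreover have "negligible (g r)" by (rule negligible_subset[OF n sub])
    ultimately show False using that(1) by (simp add: pos_def lnull_iff)
  qed
  have choose: "fst (F r) \<in> g r - Bad F r \<and> snd (F r) \<in> g r - Bad F r \<and> fst (F r) \<noteq> snd (F r)"
    if pr: "pos (g r)" for r
  proof -
    define P where "P = fst ` F ` underS W r \<union> snd ` F ` underS W r"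
    have cP: "countable P" using W(3)[of r] by (simp add: P_def)
    have BadP: "Bad F r = {z. fst z \<in> under W r} \<union> P" by (simp add: Bad_def P_def)
    obtain p where p: "p \<in> g r" "p \<notin> Bad F r" using avoid[OF pr cP] BadP by blast
    have cP': "countable (insert p P)" using cP by simp
    obtain q where q: "q \<in> g r" "q \<notin> Bad F r" "q \<noteq> p"
      using avoid[OF pr cP'] BadP by blast
    define Q where "Q pq \<longleftrightarrow> fst pq \<in> g r - Bad F r \<and> snd pq \<in> g r - Bad F r \<and> fst pq \<noteq> snd pq"
      for pq :: "(real \<times> real) \<times> (real \<times> real)"
    have ex: "\<exists>pq. Q pq" using p q by (intro exI[of _ "(p, q)"]) (auto simp: Q_def)
    have HQ: "H F r = (SOME pq. Q pq)" unfolding H_def Q_def by simp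
    have "Q (H F r)" unfolding HQ by (rule someI_ex[OF ex])
    then show ?thesis using Feq[of r] by (simp add: Q_def)
  qed
  define C where "C = {fst (F r) | r. pos (g r)}"
  have sect: "countable (UNIV - {y. (x, y) \<in> - C})" for x
  proof -
    have "UNIV - {y. (x, y) \<in> - C} \<subseteq> snd ` fst ` F ` underS W x"
    proof
      fix y assume "y \<in> UNIV - {y. (x, y) \<in> - C}"
      then obtain r where r: "pos (g r)" "(x, y) = fst (F r)" by (auto simp: C_def)
      then have "(x, y) \<notin> Bad F r" using choose[OF r(1)] by simp
      then have "x \<notin> under W r" by (simp add: Bad_def)
      then have "(x, r) \<notin> W" by (simp add: under_def)
      then have "r \<in> underS W x" using tot[of x r] wo_rel.REFL[OF wo] W(2)
        by (auto simp: underS_def refl_on_def)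
      then show "y \<in> snd ` fst ` F ` underS W x" using r(2) by (metis image_eqI snd_conv)
    qed
    moreover have "countable (snd ` fst ` F ` underS W x)" using W(3)[of x] by simp
    ultimately show ?thesis using countable_subset by blast
  qed
  have key: "(- C) \<inter> B \<noteq> {} \<and> \<not> B \<subseteq> - C" if B: "B \<in> sets borel" "pos B" for B
  proof -
    obtain r where r: "g r \<subseteq> B" "pos (g r)" using g B by (auto simp: pos_def)
    note ch = choose[OF r(2)]
    have pC: "fst (F r) \<in> C" using r(2) by (auto simp: C_def)
    have qC: "snd (F r) \<notin> C"
    proof
      assume "snd (F r) \<in> C"
      then obtain s where s: "pos (g s)" "snd (F r) = fst (F s)" by (auto simp: C_def)
      have "s = r \<or> s \<in> underS W r \<or> r \<in> underS W s" using tot[of s r] by (auto simp: underS_def)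
      moreover have "s \<noteq> r" using s(2) ch by auto
      moreover have "s \<notin> underS W r"
      proof
        assume "s \<in> underS W r"
        then have "fst (F s) \<in> Bad F r" by (simp add: Bad_def)
        then show False using ch s(2) by simp
      qed
      moreover have "r \<notin> underS W s"
      proof
        assume "r \<in> underS W s"
        then have "snd (F r) \<in> Bad F s" by (simp add: Bad_def)
        then show False using choose[OF s(1)] s(2) by simp
      qed
      ultimately show False by blast
    qed
    have "snd (F r) \<in> B" "fst (F r) \<in> B" using ch r(1) by auto
    then have "snd (F r) \<in> (- C) \<inter> B" "fst (F r) \<in> B" "fst (F r) \<notin> - C" using pC qC by auto
    then show ?thesis by blast
  qed
  have "completely_nonmeasurable meager (- C)"
    unfolding completely_nonmeasurable_def using key by (simp add: pos_def)
  moreover have "completely_nonmeasurable lnull (- C)"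
    unfolding completely_nonmeasurable_def using key by (simp add: pos_def)
  ultimately show ?thesis using sect by (intro exI[of _ "- C"]) simp
qed

end
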